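(* For every $n\ge 2$, the set of degrees of vertices of ${\rm OFG}(M_{2,n})$ (equivalently, the set of values of the number of flippable faces over all locally valid MV assignments of $M_{2,n}$) is exactly $\{2,3,4,\dots,2n-2,2n\}$.
   Context: The $2\times n$ Miura-ori $M_{2,n}$ ($n\ge1$) has faces $\alpha_{i,j}$ ($i\in\{1,2\}$, $j\in\{1,\dots,n\}$), interior vertices $x_1,\dots,x_{n-1}$, and creases $e_0$ and $e_{3k-1},e_{3k},e_{3k+1}$ ($k=1,\dots,n-1$). At $x_k$ the creases are left $e_{3k-3}$, top $e_{3k-1}$, right $e_{3k}$, bottom $e_{3k+1}$. Face $\alpha_{1,j}$ is bordered by those of $e_{3j-4}$ (iff $j\ge2$), $e_{3j-3}$, $e_{3j-1}$ (iff $j\le n-1$); $\alpha_{2,j}$ by those of $e_{3j-2}$ (iff $j\ge2$), $e_{3j-3}$, $e_{3j+1}$ (iff $j\le n-1$). An MV assignment $\mu$ maps creases to $\{1,-1\}$; it is locally valid if for each $k$ exactly one of $\mu(e_{3k-1}),\mu(e_{3k}),\mu(e_{3k+1})$ differs from $\mu(e_{3k-3})$. The face flip $\mu_\alpha$ negates $\mu$ on the creases bordering $\alpha$; $\alpha$ is flippable under $\mu$ if $\mu,\mu_\alpha$ are both locally valid. ${\rm OFG}(M_{2,n})$ has the locally valid assignments as vertices, with $\mu\sim\mu_\alpha$ for each flippable $\alpha$. *)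

theory Defs
  imports Main
begin

text \<open>The 2 x n Miura-ori M_{2,n}. Creases are indexed by natural numbers:
 the crease e_m is the number m. The creases of M_{2,n} are e_0 and
 e_{3k-1}, e_{3k}, e_{3k+1} for k = 1..n-1.\<close>

definition creases :: "nat \<Rightarrow> nat set" where
  "creases n = {0} \<union> (\<Union>k\<in>{1..n-1}. {3*k-1, 3*k, 3*k+1})"

definition faces :: "nat \<Rightarrow> (nat \<times> nat) set" where
  "faces n = {1,2} \<times> {1..n}"

definition face_creases :: "nat \<Rightarrow> nat \<times> nat \<Rightarrow> nat set" where
  "face_creases n f = (case f of (i, j) \<Rightarrow>
     (if i = 1 then
        (if 2 \<le> j then {3*j-4} else {}) \<union> {3*j-3} \<union> (if j \<le> n-1 then {3*j-1} else {})
      else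
        (if 2 \<le> j then {3*j-2} else {}) \<union> {3*j-3} \<union> (if j \<le> n-1 then {3*j+1} else {})))"

text \<open>MV assignments: maps from the creases to {1,-1}. To represent them as total
 functions uniquely, we fix the value 1 outside the set of creases.\<close>
definition mv_assignments :: "nat \<Rightarrow> (nat \<Rightarrow> int) set" where
  "mv_assignments n = {\<mu>. (\<forall>e\<in>creases n. \<mu> e \<in> {1, -1}) \<and> (\<forall>e. e \<notin> creases n \<longrightarrow> \<mu> e = 1)}"

text \<open>Local validity: at each interior vertex x_k exactly one of the top, right,
 bottom creases has a value different from the left crease.\<close>
definition locally_valid :: "nat \<Rightarrow> (nat \<Rightarrow> int) \<Rightarrow> bool" where
  "locally_valid n \<mu> \<longleftrightarrow> \<mu> \<in> mv_assignments n \<and>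
     (\<forall>k\<in>{1..n-1}. card {e\<in>{3*k-1, 3*k, 3*k+1}. \<mu> e \<noteq> \<mu> (3*k-3)} = 1)"

definition face_flip :: "nat \<Rightarrow> (nat \<Rightarrow> int) \<Rightarrow> nat \<times> nat \<Rightarrow> (nat \<Rightarrow> int)" where
  "face_flip n \<mu> f = (\<lambda>e. if e \<in> face_creases n f then - \<mu> e else \<mu> e)"

definition flippable :: "nat \<Rightarrow> (nat \<Rightarrow> int) \<Rightarrow> nat \<times> nat \<Rightarrow> bool" where
  "flippable n \<mu> f \<longleftrightarrow> f \<in> faces n \<and> locally_valid n \<mu> \<and> locally_valid n (face_flip n \<mu> f)"

definition ofg_vertices :: "nat \<Rightarrow> (nat \<Rightarrow> int) set" where
  "ofg_vertices n = {\<mu>. locally_valid n \<mu>}"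

definition ofg_adj :: "nat \<Rightarrow> (nat \<Rightarrow> int) \<Rightarrow> (nat \<Rightarrow> int) \<Rightarrow> bool" where
  "ofg_adj n \<mu> \<nu> \<longleftrightarrow> (\<exists>f. flippable n \<mu> f \<and> \<nu> = face_flip n \<mu> f)"

definition ofg_degree :: "nat \<Rightarrow> (nat \<Rightarrow> int) \<Rightarrow> nat" where
  "ofg_degree n \<mu> = card {\<nu>. ofg_adj n \<mu> \<nu>}"

end

theory Submission
  imports Defs
begin

definition ex1 :: "bool \<Rightarrow> bool \<Rightarrow> bool \<Rightarrow> bool" where
  "ex1 x y z \<longleftrightarrow> (x \<and> \<not> y \<and> \<not> z) \<or> (\<not> x \<and> y \<and> \<not> z) \<or> (\<not> x \<and> \<not> y \<and> z)"

definition vok :: "(nat \<Rightarrow> int) \<Rightarrow> nat \<Rightarrow> bool" where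
  "vok \<mu> k \<longleftrightarrow> ex1 (\<mu> (3*k-1) \<noteq> \<mu> (3*k-3)) (\<mu> (3*k) \<noteq> \<mu> (3*k-3)) (\<mu> (3*k+1) \<noteq> \<mu> (3*k-3))"

lemma card3: assumes "a \<noteq> b" "a \<noteq> c" "b \<noteq> c"
  shows "card {e\<in>{a,b,c}. P e} = 1 \<longleftrightarrow> ex1 (P a) (P b) (P c)"
proof -
  have "{e\<in>{a,b,c}. P e} = (if P a then {a} else {}) \<union> (if P b then {b} else {}) \<union> (if P c then {c} else {})"
    by auto
  note eq = this
  show ?thesis unfolding eq using assms by (cases "P a"; cases "P b"; cases "P c") (simp_all add: ex1_def)
qed

lemma lv_iff: "locally_valid n \<mu> \<longleftrightarrow> \<mu> \<in> mv_assignments n \<and> (\<forall>k\<in>{1..n-1}. vok \<mu> k)"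
proof -
  have "k \<in> {1..n-1} \<Longrightarrow> card {e\<in>{3*k-1, 3*k, 3*k+1}. \<mu> e \<noteq> \<mu> (3*k-3)} = 1 \<longleftrightarrow> vok \<mu> k" for k
    unfolding vok_def by (rule card3) auto
  then show ?thesis unfolding locally_valid_def by auto
qed

lemma creases_mem: assumes "k \<in> {1..n-1}"
  shows "3*k-3 \<in> creases n" "3*k-1 \<in> creases n" "3*k \<in> creases n" "3*k+1 \<in> creases n"
proof -
  show "3*k-1 \<in> creases n" "3*k \<in> creases n" "3*k+1 \<in> creases n"
    using assms unfolding creases_def by blast+
  show "3*k-3 \<in> creases n"
  proof (cases "k = 1")
    case True then show ?thesis by (simp add: creases_def)
  next
    case False
    then have "k-1 \<in> {1..n-1}" "3*k-3 = 3*(k-1)" using assms by auto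
    then show ?thesis unfolding creases_def by blast
  qed
qed

lemma fc_top: assumes "k \<in> {1..n-1}" "j \<in> {1..n}"
  shows "(3*k-3 \<in> face_creases n (1,j)) = (k = j)"
    "(3*k-1 \<in> face_creases n (1,j)) = (k = j \<or> k+1 = j)"
    "(3*k \<in> face_creases n (1,j)) = (k+1 = j)"
    "(3*k+1 \<notin> face_creases n (1,j))"
proof -
  obtain a b where ab: "k = Suc a" "j = Suc b" "a+1 \<le> n-1" "b+1 \<le> n" using assms
    by (metis Suc_eq_plus1 atLeastAtMost_iff not0_implies_Suc not_one_le_zero)
  have fc: "face_creases n (1,j) = {e. (1 \<le> b \<and> e+1 = 3*b) \<or> e = 3*b \<or> (b+1 \<le> n-1 \<and> e = 3*b+2)}"
    unfolding face_creases_def ab by auto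
  show "(3*k-3 \<in> face_creases n (1,j)) = (k = j)"
    unfolding fc using ab by (auto; presburger)
  show "(3*k-1 \<in> face_creases n (1,j)) = (k = j \<or> k+1 = j)"
    unfolding fc using ab by (auto; presburger)
  show "(3*k \<in> face_creases n (1,j)) = (k+1 = j)"
    unfolding fc using ab by (auto; presburger)
  show "(3*k+1 \<notin> face_creases n (1,j))"
    unfolding fc using ab by (auto; presburger)
qed

lemma fc_bot: assumes "k \<in> {1..n-1}" "j \<in> {1..n}"
  shows "(3*k-3 \<in> face_creases n (2,j)) = (k = j)"
    "(3*k-1 \<notin> face_creases n (2,j))"
    "(3*k \<in> face_creases n (2,j)) = (k+1 = j)"
    "(3*k+1 \<in> face_creases n (2,j)) = (k = j \<or> k+1 = j)"
proof -
  obtain a b where ab: "k = Suc a" "j = Suc b" "a+1 \<le> n-1" "b+1 \<le> n" using assms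
    by (metis Suc_eq_plus1 atLeastAtMost_iff not0_implies_Suc not_one_le_zero)
  have fc: "face_creases n (2,j) = {e. (1 \<le> b \<and> e = 3*b+1) \<or> e = 3*b \<or> (b+1 \<le> n-1 \<and> e = 3*b+4)}"
    unfolding face_creases_def ab by auto
  show "(3*k-3 \<in> face_creases n (2,j)) = (k = j)"
    unfolding fc using ab by (auto; presburger)
  show "(3*k-1 \<notin> face_creases n (2,j))"
    unfolding fc using ab by (auto; presburger)
  show "(3*k \<in> face_creases n (2,j)) = (k+1 = j)"
    unfolding fc using ab by (auto; presburger)
  show "(3*k+1 \<in> face_creases n (2,j)) = (k = j \<or> k+1 = j)"
    unfolding fc using ab by (auto; presburger)
qed


definition top_ok :: "nat \<Rightarrow> (nat \<Rightarrow> int) \<Rightarrow> nat \<Rightarrow> bool" where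
  "top_ok n \<mu> j \<longleftrightarrow> (\<forall>k\<in>{1..n-1}. (k = j \<longrightarrow> \<mu> (3*k-1) = \<mu> (3*k-3)) \<and> (k+1 = j \<longrightarrow> \<mu> (3*k+1) = \<mu> (3*k-3)))"

definition bot_ok :: "nat \<Rightarrow> (nat \<Rightarrow> int) \<Rightarrow> nat \<Rightarrow> bool" where
  "bot_ok n \<mu> j \<longleftrightarrow> (\<forall>k\<in>{1..n-1}. (k = j \<longrightarrow> \<mu> (3*k+1) = \<mu> (3*k-3)) \<and> (k+1 = j \<longrightarrow> \<mu> (3*k-1) = \<mu> (3*k-3)))"

definition fok :: "nat \<Rightarrow> (nat \<Rightarrow> int) \<Rightarrow> nat \<times> nat \<Rightarrow> bool" where
  "fok n \<mu> f = (if fst f = 1 then top_ok n \<mu> (snd f) else bot_ok n \<mu> (snd f))"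

lemma mv_val: "\<mu> \<in> mv_assignments n \<Longrightarrow> e \<in> creases n \<Longrightarrow> \<mu> e = 1 \<or> \<mu> e = -1"
  unfolding mv_assignments_def by auto

lemma ab1: assumes "L = 1 \<or> L = -1" "T = 1 \<or> T = -1" "R = 1 \<or> R = -1" "B = 1 \<or> B = -1"
  "ex1 (T \<noteq> L) (R \<noteq> L) (B \<noteq> (L::int))"
  shows "ex1 (-T \<noteq> -L) (R \<noteq> -L) (B \<noteq> -L) \<longleftrightarrow> T = L"
    "ex1 (-T \<noteq> L) (-R \<noteq> L) (B \<noteq> L) \<longleftrightarrow> B = L"
    "ex1 (T \<noteq> -L) (R \<noteq> -L) (-B \<noteq> -L) \<longleftrightarrow> B = L"
    "ex1 (T \<noteq> L) (-R \<noteq> L) (-B \<noteq> L) \<longleftrightarrow> T = L"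
  using assms by (elim disjE; simp add: ex1_def)+

lemma vtx_top: assumes "k \<in> {1..n-1}" "j \<in> {1..n}" "\<mu> \<in> mv_assignments n" "vok \<mu> k"
  shows "vok (face_flip n \<mu> (1,j)) k \<longleftrightarrow> ((k = j \<longrightarrow> \<mu> (3*k-1) = \<mu> (3*k-3)) \<and> (k+1 = j \<longrightarrow> \<mu> (3*k+1) = \<mu> (3*k-3)))"
proof -
  have v: "\<mu> (3*k-3) = 1 \<or> \<mu> (3*k-3) = -1" "\<mu> (3*k-1) = 1 \<or> \<mu> (3*k-1) = -1"
     "\<mu> (3*k) = 1 \<or> \<mu> (3*k) = -1" "\<mu> (3*k+1) = 1 \<or> \<mu> (3*k+1) = -1"
    using mv_val[OF assms(3)] creases_mem[OF assms(1)] by auto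
  let ?\<nu> = "face_flip n \<mu> (1,j)"
  have e: "?\<nu> (3*k-3) = (if k = j then - \<mu> (3*k-3) else \<mu> (3*k-3))"
    "?\<nu> (3*k-1) = (if k = j \<or> k+1 = j then - \<mu> (3*k-1) else \<mu> (3*k-1))"
    "?\<nu> (3*k) = (if k+1 = j then - \<mu> (3*k) else \<mu> (3*k))"
    "?\<nu> (3*k+1) = \<mu> (3*k+1)"
    unfolding face_flip_def using fc_top[OF assms(1,2)] by simp_all
  have o: "ex1 (\<mu> (3*k-1) \<noteq> \<mu> (3*k-3)) (\<mu> (3*k) \<noteq> \<mu> (3*k-3)) (\<mu> (3*k+1) \<noteq> \<mu> (3*k-3))"
    using assms(4) unfolding vok_def .
  show ?thesis
  proof (cases "k = j")
    case True
    then have "k + 1 \<noteq> j" by simp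
    then show ?thesis unfolding vok_def e using True ab1(1)[OF v o] by simp
  next
    case False
    show ?thesis
    proof (cases "k + 1 = j")
      case True
      then show ?thesis unfolding vok_def e using False ab1(2)[OF v o] by simp
    next
      case False2: False
      then show ?thesis unfolding vok_def e using False o by simp
    qed
  qed
qed

lemma vtx_bot: assumes "k \<in> {1..n-1}" "j \<in> {1..n}" "\<mu> \<in> mv_assignments n" "vok \<mu> k"
  shows "vok (face_flip n \<mu> (2,j)) k \<longleftrightarrow> ((k = j \<longrightarrow> \<mu> (3*k+1) = \<mu> (3*k-3)) \<and> (k+1 = j \<longrightarrow> \<mu> (3*k-1) = \<mu> (3*k-3)))"
proof -
  have v: "\<mu> (3*k-3) = 1 \<or> \<mu> (3*k-3) = -1" "\<mu> (3*k-1) = 1 \<or> \<mu> (3*k-1) = -1"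
     "\<mu> (3*k) = 1 \<or> \<mu> (3*k) = -1" "\<mu> (3*k+1) = 1 \<or> \<mu> (3*k+1) = -1"
    using mv_val[OF assms(3)] creases_mem[OF assms(1)] by auto
  let ?\<nu> = "face_flip n \<mu> (2,j)"
  have e: "?\<nu> (3*k-3) = (if k = j then - \<mu> (3*k-3) else \<mu> (3*k-3))"
    "?\<nu> (3*k-1) = \<mu> (3*k-1)"
    "?\<nu> (3*k) = (if k+1 = j then - \<mu> (3*k) else \<mu> (3*k))"
    "?\<nu> (3*k+1) = (if k = j \<or> k+1 = j then - \<mu> (3*k+1) else \<mu> (3*k+1))"
    unfolding face_flip_def using fc_bot[OF assms(1,2)] by simp_all
  have o: "ex1 (\<mu> (3*k-1) \<noteq> \<mu> (3*k-3)) (\<mu> (3*k) \<noteq> \<mu> (3*k-3)) (\<mu> (3*k+1) \<noteq> \<mu> (3*k-3))"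
    using assms(4) unfolding vok_def .
  show ?thesis
  proof (cases "k = j")
    case True
    then have "k + 1 \<noteq> j" by simp
    then show ?thesis unfolding vok_def e using True ab1(3)[OF v o] by simp
  next
    case False
    show ?thesis
    proof (cases "k + 1 = j")
      case True
      then show ?thesis unfolding vok_def e using False ab1(4)[OF v o] by simp
    next
      case False2: False
      then show ?thesis unfolding vok_def e using False o by simp
    qed
  qed
qed

lemma fc_sub: assumes "f \<in> faces n" shows "face_creases n f \<subseteq> creases n"
proof
  fix e assume e: "e \<in> face_creases n f"
  obtain i j where f: "f = (i,j)" "i \<in> {1,2}" "j \<in> {1..n}" using assms unfolding faces_def by auto
  have c0: "3*j-3 \<in> creases n"
  proof (cases "j = 1")
    case True then show ?thesis by (simp add: creases_def)
  next
    case False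
    then have "j-1 \<in> {1..n-1}" "3*j-3 = 3*(j-1)" using f by auto
    then show ?thesis unfolding creases_def by blast
  qed
  have c1: "3*j-4 \<in> creases n" "3*j-2 \<in> creases n" if "2 \<le> j"
  proof -
    have "j-1 \<in> {1..n-1}" "3*j-4 = 3*(j-1)-1" "3*j-2 = 3*(j-1)+1" using f that by auto
    then show "3*j-4 \<in> creases n" "3*j-2 \<in> creases n" unfolding creases_def by blast+
  qed
  have c2: "3*j-1 \<in> creases n" "3*j+1 \<in> creases n" if "j \<le> n-1"
    using that f unfolding creases_def by auto
  show "e \<in> creases n" using e f c0 c1 c2 unfolding face_creases_def by (auto split: if_splits)
qed

lemma flip_mv: assumes "\<mu> \<in> mv_assignments n" "f \<in> faces n"
  shows "face_flip n \<mu> f \<in> mv_assignments n"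
  using assms fc_sub[OF assms(2)] unfolding mv_assignments_def face_flip_def by auto

lemma flippable_iff: assumes "locally_valid n \<mu>"
  shows "flippable n \<mu> f \<longleftrightarrow> f \<in> faces n \<and> fok n \<mu> f"
proof (cases "f \<in> faces n")
  case False then show ?thesis unfolding flippable_def by auto
next
  case True
  obtain i j where f: "f = (i,j)" "i \<in> {1,2}" "j \<in> {1..n}" using True unfolding faces_def by auto
  have mv: "\<mu> \<in> mv_assignments n" and vk: "\<And>k. k \<in> {1..n-1} \<Longrightarrow> vok \<mu> k"
    using assms lv_iff by auto
  have "locally_valid n (face_flip n \<mu> f) \<longleftrightarrow> fok n \<mu> f"
  proof (cases "i = 1")
    case True
    then show ?thesis unfolding lv_iff using flip_mv[OF mv \<open>f \<in> faces n\<close>] vtx_top[OF _ f(3) mv vk] f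
      by (simp add: fok_def top_ok_def)
  next
    case False
    then have "i = 2" using f by auto
    then show ?thesis unfolding lv_iff using flip_mv[OF mv \<open>f \<in> faces n\<close>] vtx_bot[OF _ f(3) mv vk] f
      by (simp add: fok_def bot_ok_def)
  qed
  then show ?thesis using assms True unfolding flippable_def by auto
qed


definition hh :: "nat \<Rightarrow> nat \<Rightarrow> int" where
  "hh m k = (if k \<le> m then 1 else (-1)^(k-m))"

definition mu_c :: "nat \<Rightarrow> nat \<Rightarrow> bool \<Rightarrow> nat \<Rightarrow> int" where
  "mu_c n m od e = (if e \<notin> creases n then 1 else if e mod 3 = 0 then hh m (e div 3)
     else (let k = (if e mod 3 = 2 then e div 3 + 1 else e div 3) in
       if k \<le> m then (if (e mod 3 = 2) = (od \<and> k = 1) then 1 else -1) else hh m (k-1)))"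

lemma hh_val: "hh m k = 1 \<or> hh m k = -1"
  unfolding hh_def by (cases "even (k-m)") auto

lemma hh_step: "m < k \<Longrightarrow> hh m k = - hh m (k-1)"
proof -
  assume a: "m < k"
  show ?thesis
  proof (cases "k - 1 \<le> m")
    case True
    then have "k - m = 1" using a by simp
    then show ?thesis using True a unfolding hh_def by simp
  next
    case False
    then have "k - m = Suc (k - 1 - m)" using a by simp
    then show ?thesis using False a unfolding hh_def by simp
  qed
qed

lemma hh_le: "k \<le> m \<Longrightarrow> hh m k = 1" unfolding hh_def by simp

lemma mu_c_vals: assumes "k \<in> {1..n-1}"
  shows "mu_c n m od (3*k-3) = hh m (k-1)"
    "mu_c n m od (3*k-1) = (if k \<le> m then (if od \<and> k = 1 then 1 else -1) else hh m (k-1))"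
    "mu_c n m od (3*k) = hh m k"
    "mu_c n m od (3*k+1) = (if k \<le> m then (if od \<and> k = 1 then -1 else 1) else hh m (k-1))"
proof -
  obtain a where a: "k = Suc a" using assms by (cases k) auto
  have c: "3*k-3 \<in> creases n" "3*k-1 \<in> creases n" "3*k \<in> creases n" "3*k+1 \<in> creases n"
    using creases_mem[OF assms] by auto
  have m: "(3*k-3) mod 3 = 0" "(3*k-3) div 3 = k-1" "(3*k-1) mod 3 = 2" "(3*k-1) div 3 + 1 = k"
     "(3*k) mod 3 = 0" "(3*k) div 3 = k" "(3*k+1) mod 3 = 1" "(3*k+1) div 3 = k"
  proof -
    have x: "3*k-3 = 3*a" "3*k-1 = 3*a+2" "3*k = 3*a+3" "3*k+1 = 3*a+4" using a by auto
    show "(3*k-3) mod 3 = 0" "(3*k-3) div 3 = k-1" "(3*k-1) mod 3 = 2" "(3*k-1) div 3 + 1 = k"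
     "(3*k) mod 3 = 0" "(3*k) div 3 = k" "(3*k+1) mod 3 = 1" "(3*k+1) div 3 = k"
      unfolding x using a by (simp_all add: mod_Suc)
  qed
  show "mu_c n m od (3*k-3) = hh m (k-1)" using c m unfolding mu_c_def by simp
  show "mu_c n m od (3*k-1) = (if k \<le> m then (if od \<and> k = 1 then 1 else -1) else hh m (k-1))"
    using c m unfolding mu_c_def by (simp add: Let_def)
  show "mu_c n m od (3*k) = hh m k"
    using c m unfolding mu_c_def by simp
  show "mu_c n m od (3*k+1) = (if k \<le> m then (if od \<and> k = 1 then -1 else 1) else hh m (k-1))"
    using c m unfolding mu_c_def by (simp add: Let_def)
qed

lemma mu_c_mv: "mu_c n m od \<in> mv_assignments n"
  unfolding mv_assignments_def mu_c_def using hh_val by (auto simp: Let_def)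

lemma mu_c_valid: "locally_valid n (mu_c n m od)"
  unfolding lv_iff
proof (intro conjI ballI mu_c_mv)
  fix k assume k: "k \<in> {1..n-1}"
  show "vok (mu_c n m od) k"
  proof (cases "k \<le> m")
    case True
    then show ?thesis unfolding vok_def mu_c_vals[OF k] using hh_le[of k m] hh_le[of "k-1" m]
      by (simp add: ex1_def)
  next
    case False
    then show ?thesis unfolding vok_def mu_c_vals[OF k] using hh_step[of m k] hh_val[of m "k-1"]
      by (auto simp add: ex1_def)
  qed
qed


lemma top_ok_alt: assumes "j \<in> {1..n}"
  shows "top_ok n \<mu> j \<longleftrightarrow> (j \<le> n-1 \<longrightarrow> \<mu> (3*j-1) = \<mu> (3*j-3)) \<and>
     (2 \<le> j \<longrightarrow> \<mu> (3*(j-1)+1) = \<mu> (3*(j-1)-3))"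
proof
  assume a: "top_ok n \<mu> j"
  show "(j \<le> n-1 \<longrightarrow> \<mu> (3*j-1) = \<mu> (3*j-3)) \<and> (2 \<le> j \<longrightarrow> \<mu> (3*(j-1)+1) = \<mu> (3*(j-1)-3))"
  proof (intro conjI impI)
    assume "j \<le> n-1" then show "\<mu> (3*j-1) = \<mu> (3*j-3)" using a assms unfolding top_ok_def by auto
  next
    assume j: "2 \<le> j"
    then have "j - 1 \<in> {1..n-1}" "j-1+1 = j" using assms by auto
    then show "\<mu> (3*(j-1)+1) = \<mu> (3*(j-1)-3)" using a unfolding top_ok_def by blast
  qed
next
  assume "(j \<le> n-1 \<longrightarrow> \<mu> (3*j-1) = \<mu> (3*j-3)) \<and> (2 \<le> j \<longrightarrow> \<mu> (3*(j-1)+1) = \<mu> (3*(j-1)-3))"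
  then show "top_ok n \<mu> j" unfolding top_ok_def by auto
qed

lemma bot_ok_alt: assumes "j \<in> {1..n}"
  shows "bot_ok n \<mu> j \<longleftrightarrow> (j \<le> n-1 \<longrightarrow> \<mu> (3*j+1) = \<mu> (3*j-3)) \<and>
     (2 \<le> j \<longrightarrow> \<mu> (3*(j-1)-1) = \<mu> (3*(j-1)-3))"
proof
  assume a: "bot_ok n \<mu> j"
  show "(j \<le> n-1 \<longrightarrow> \<mu> (3*j+1) = \<mu> (3*j-3)) \<and> (2 \<le> j \<longrightarrow> \<mu> (3*(j-1)-1) = \<mu> (3*(j-1)-3))"
  proof (intro conjI impI)
    assume "j \<le> n-1" then show "\<mu> (3*j+1) = \<mu> (3*j-3)" using a assms unfolding bot_ok_def by auto
  next
    assume j: "2 \<le> j"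
    then have "j - 1 \<in> {1..n-1}" "j-1+1 = j" using assms by auto
    then show "\<mu> (3*(j-1)-1) = \<mu> (3*(j-1)-3)" using a unfolding bot_ok_def by blast
  qed
next
  assume "(j \<le> n-1 \<longrightarrow> \<mu> (3*j+1) = \<mu> (3*j-3)) \<and> (2 \<le> j \<longrightarrow> \<mu> (3*(j-1)-1) = \<mu> (3*(j-1)-3))"
  then show "bot_ok n \<mu> j" unfolding bot_ok_def by auto
qed

definition FF :: "nat \<Rightarrow> (nat \<Rightarrow> int) \<Rightarrow> (nat \<times> nat) set" where
  "FF n \<mu> = {f\<in>faces n. fok n \<mu> f}"

lemma card_faces: "card (faces n) = 2*n"
  unfolding faces_def by (simp add: card_cartesian_product)

lemma finite_faces: "finite (faces n)" unfolding faces_def by simp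

lemma card_FF: "card (FF n \<mu>) = card {j\<in>{1..n}. top_ok n \<mu> j} + card {j\<in>{1..n}. bot_ok n \<mu> j}"
proof -
  have "FF n \<mu> = Pair 1 ` {j\<in>{1..n}. top_ok n \<mu> j} \<union> Pair 2 ` {j\<in>{1..n}. bot_ok n \<mu> j}"
    unfolding FF_def faces_def fok_def by auto
  then have "card (FF n \<mu>) = card (Pair (1::nat) ` {j\<in>{1..n}. top_ok n \<mu> j}) + card (Pair (2::nat) ` {j\<in>{1..n}. bot_ok n \<mu> j})"
    by (simp add: card_Un_disjoint) (subst card_Un_disjoint; auto)
  also have "\<dots> = card {j\<in>{1..n}. top_ok n \<mu> j} + card {j\<in>{1..n}. bot_ok n \<mu> j}"
    by (simp add: card_image inj_on_def)
  finally show ?thesis .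
qed

lemma FF_lower: assumes "locally_valid n \<mu>" "2 \<le> n" shows "2 \<le> card (FF n \<mu>)"
proof -
  have vk: "\<And>k. k \<in> {1..n-1} \<Longrightarrow> vok \<mu> k" using assms lv_iff by auto
  have "\<exists>i\<in>{1,2}. fok n \<mu> (i,1)"
  proof -
    have o: "vok \<mu> 1" using vk assms by auto
    have "top_ok n \<mu> 1 \<longleftrightarrow> \<mu> 2 = \<mu> 0" "bot_ok n \<mu> 1 \<longleftrightarrow> \<mu> 4 = \<mu> 0"
      using top_ok_alt[of 1 n \<mu>] bot_ok_alt[of 1 n \<mu>] assms by auto
    then show ?thesis using o unfolding vok_def ex1_def fok_def by auto
  qed
  then obtain i where i: "i \<in> {1,2}" "fok n \<mu> (i,1)" by blast
  have "\<exists>i\<in>{1,2}. fok n \<mu> (i,n)"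
  proof -
    have o: "vok \<mu> (n-1)" using vk assms by auto
    have "top_ok n \<mu> n \<longleftrightarrow> \<mu> (3*(n-1)+1) = \<mu> (3*(n-1)-3)" "bot_ok n \<mu> n \<longleftrightarrow> \<mu> (3*(n-1)-1) = \<mu> (3*(n-1)-3)"
      using top_ok_alt[of n n \<mu>] bot_ok_alt[of n n \<mu>] assms by auto
    then show ?thesis using o unfolding vok_def ex1_def fok_def by auto
  qed
  then obtain i' where i': "i' \<in> {1,2}" "fok n \<mu> (i',n)" by blast
  have "{(i,1),(i',n)} \<subseteq> FF n \<mu>" using i i' assms unfolding FF_def faces_def by auto
  moreover have "card {(i,1),(i',n)} = 2" using assms by auto
  moreover have "finite (FF n \<mu>)" unfolding FF_def using finite_faces by simp
  ultimately show ?thesis by (metis card_mono)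
qed

lemma FF_upper: assumes "2 \<le> n"
  shows "card (FF n \<mu>) = 2*n \<or> card (FF n \<mu>) \<le> 2*n-2"
proof (cases "\<forall>k\<in>{1..n-1}. \<mu> (3*k-1) = \<mu> (3*k-3) \<and> \<mu> (3*k+1) = \<mu> (3*k-3)")
  case True
  then have "FF n \<mu> = faces n" unfolding FF_def fok_def top_ok_def bot_ok_def by auto
  then show ?thesis using card_faces by simp
next
  case False
  then obtain k where k: "k \<in> {1..n-1}" and d: "\<mu> (3*k-1) \<noteq> \<mu> (3*k-3) \<or> \<mu> (3*k+1) \<noteq> \<mu> (3*k-3)" by blast
  obtain p q where pq: "p \<in> faces n" "q \<in> faces n" "p \<noteq> q" "p \<notin> FF n \<mu>" "q \<notin> FF n \<mu>"
  proof (cases "\<mu> (3*k-1) \<noteq> \<mu> (3*k-3)")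
    case True
    have "\<not> top_ok n \<mu> k" "\<not> bot_ok n \<mu> (k+1)" using True k unfolding top_ok_def bot_ok_def by auto
    then show ?thesis using that[of "(1,k)" "(2,k+1)"] k unfolding FF_def faces_def fok_def by auto
  next
    case False
    then have B: "\<mu> (3*k+1) \<noteq> \<mu> (3*k-3)" using d by simp
    have "\<not> top_ok n \<mu> (k+1)" "\<not> bot_ok n \<mu> k" using B k unfolding top_ok_def bot_ok_def by auto
    then show ?thesis using that[of "(1,k+1)" "(2,k)"] k unfolding FF_def faces_def fok_def by auto
  qed
  have "FF n \<mu> \<subseteq> faces n - {p,q}" using pq unfolding FF_def by auto
  then have "card (FF n \<mu>) \<le> card (faces n - {p,q})" using finite_faces by (simp add: card_mono)
  also have "\<dots> = 2*n - 2" using pq card_faces finite_faces by (simp add: card_Diff_subset)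
  finally show ?thesis by simp
qed


lemma mu_c_T: assumes "k \<in> {1..n-1}"
  shows "mu_c n m od (3*k-1) = mu_c n m od (3*k-3) \<longleftrightarrow> (m < k \<or> (od \<and> k = 1))"
  unfolding mu_c_vals[OF assms] using hh_le[of "k-1" m] by auto

lemma mu_c_B: assumes "k \<in> {1..n-1}"
  shows "mu_c n m od (3*k+1) = mu_c n m od (3*k-3) \<longleftrightarrow> (m < k \<or> \<not> (od \<and> k = 1))"
  unfolding mu_c_vals[OF assms] using hh_le[of "k-1" m] by auto

lemma mu_c_top: assumes "j \<in> {1..n}"
  shows "top_ok n (mu_c n m od) j \<longleftrightarrow> (j \<le> n-1 \<longrightarrow> m < j \<or> (od \<and> j = 1)) \<and>
     (2 \<le> j \<longrightarrow> m < j-1 \<or> \<not> (od \<and> j-1 = 1))"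
proof -
  have a: "j \<le> n-1 \<Longrightarrow> j \<in> {1..n-1}" "2 \<le> j \<Longrightarrow> j-1 \<in> {1..n-1}" using assms by auto
  show ?thesis unfolding top_ok_alt[OF assms] using mu_c_T[OF a(1)] mu_c_B[OF a(2)] by blast
qed

lemma mu_c_bot: assumes "j \<in> {1..n}"
  shows "bot_ok n (mu_c n m od) j \<longleftrightarrow> (j \<le> n-1 \<longrightarrow> m < j \<or> \<not> (od \<and> j = 1)) \<and>
     (2 \<le> j \<longrightarrow> m < j-1 \<or> (od \<and> j-1 = 1))"
proof -
  have a: "j \<le> n-1 \<Longrightarrow> j \<in> {1..n-1}" "2 \<le> j \<Longrightarrow> j-1 \<in> {1..n-1}" using assms by auto
  show ?thesis unfolding bot_ok_alt[OF assms] using mu_c_B[OF a(1)] mu_c_T[OF a(2)] by blast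
qed

lemma count_even: assumes "m \<le> n-1" "2 \<le> n"
  shows "card (FF n (mu_c n m False)) = 2*n - 2*m"
proof -
  have A: "{j\<in>{1..n}. top_ok n (mu_c n m False) j} = {m+1..n}"
    using mu_c_top[of _ n m False] assms by auto
  have B: "{j\<in>{1..n}. bot_ok n (mu_c n m False) j} = insert 1 {m+2..n}"
    using mu_c_bot[of _ n m False] assms by auto
  show ?thesis unfolding card_FF A B using assms by simp
qed

lemma count_odd: assumes "m \<le> n-1" "2 \<le> m"
  shows "card (FF n (mu_c n m True)) = 2*n - 2*m + 1"
proof -
  have A: "{j\<in>{1..n}. top_ok n (mu_c n m True) j} = insert 1 {m+1..n}"
    using mu_c_top[of _ n m True] assms by auto
  have B: "{j\<in>{1..n}. bot_ok n (mu_c n m True) j} = insert 2 {m+2..n}"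
    using mu_c_bot[of _ n m True] assms by auto
  show ?thesis unfolding card_FF A B using assms by simp
qed

lemma count_eq: assumes "locally_valid n \<mu>" shows "card {f. flippable n \<mu> f} = card (FF n \<mu>)"
  using flippable_iff[OF assms] unfolding FF_def by simp

lemma fc_expl1: "face_creases n (1, Suc b) = {e. (1 \<le> b \<and> e+1 = 3*b) \<or> e = 3*b \<or> (b+1 \<le> n-1 \<and> e = 3*b+2)}"
  unfolding face_creases_def by auto

lemma fc_expl2: "face_creases n (2, Suc b) = {e. (1 \<le> b \<and> e = 3*b+1) \<or> e = 3*b \<or> (b+1 \<le> n-1 \<and> e = 3*b+4)}"
  unfolding face_creases_def by auto

lemma fc_inj: assumes "2 \<le> n" "f \<in> faces n" "g \<in> faces n" "face_creases n f = face_creases n g"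
  shows "f = g"
proof -
  obtain i yf where f0: "f = (i, yf)" "i \<in> {1,2}" "yf \<in> {1..n}" using assms(2) unfolding faces_def by auto
  obtain b where "yf = Suc b" using f0(3) by (cases yf) auto
  then have f: "f = (i, Suc b)" "i \<in> {1,2}" "b+1 \<le> n" using f0 by auto
  obtain i' yg where g0: "g = (i', yg)" "i' \<in> {1,2}" "yg \<in> {1..n}" using assms(3) unfolding faces_def by auto
  obtain b' where "yg = Suc b'" using g0(3) by (cases yg) auto
  then have g: "g = (i', Suc b')" "i' \<in> {1,2}" "b'+1 \<le> n" using g0 by auto
  have "3*b \<in> face_creases n f" using f fc_expl1 fc_expl2 by auto
  then have "3*b \<in> face_creases n g" using assms(4) by simp
  then have "3*b+1 = 3*b' \<or> 3*b = 3*b' \<or> 3*b = 3*b'+2 \<or> 3*b = 3*b'+1 \<or> 3*b = 3*b'+4"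
    using g fc_expl1[of n b'] fc_expl2[of n b'] by auto
  then have bb: "b = b'" by presburger
  show ?thesis
  proof (rule ccontr)
    assume "f \<noteq> g"
    then have ii: "i \<noteq> i'" using f g bb by auto
    show False
    proof (cases "1 \<le> b")
      case True
      then have "3*b - 1 \<in> face_creases n (1, Suc b)" "3*b - 1 \<notin> face_creases n (2, Suc b)"
        unfolding fc_expl1 fc_expl2 by auto
      then show False using assms(4) f g bb ii by auto
    next
      case False
      then have "b = 0" by simp
      then have "3*b + 2 \<in> face_creases n (1, Suc b)" "3*b + 2 \<notin> face_creases n (2, Suc b)"
        unfolding fc_expl1 fc_expl2 using assms(1) by auto
      then show False using assms(4) f g bb ii by auto
    qed
  qed
qed

lemma flip_inj: assumes "2 \<le> n" "\<mu> \<in> mv_assignments n"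
  shows "inj_on (face_flip n \<mu>) (faces n)"
proof (rule inj_onI)
  fix f g assume fg: "f \<in> faces n" "g \<in> faces n" "face_flip n \<mu> f = face_flip n \<mu> g"
  have key: "e \<in> face_creases n f \<longleftrightarrow> e \<in> face_creases n g" if c: "e \<in> creases n" for e
  proof -
    have ne: "\<mu> e \<noteq> - \<mu> e" using mv_val[OF assms(2) c] by auto
    have "face_flip n \<mu> f e = face_flip n \<mu> g e" using fg(3) by simp
    then have "(if e \<in> face_creases n f then - \<mu> e else \<mu> e) = (if e \<in> face_creases n g then - \<mu> e else \<mu> e)"
      unfolding face_flip_def .
    then show ?thesis using ne by (cases "e \<in> face_creases n f"; cases "e \<in> face_creases n g") simp_all
  qed
  have "face_creases n f = face_creases n g"
    using key fc_sub[OF fg(1)] fc_sub[OF fg(2)] by blast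
  then show "f = g" using fc_inj[OF assms(1) fg(1,2)] by simp
qed

lemma degree_eq: assumes "2 \<le> n" "locally_valid n \<mu>"
  shows "ofg_degree n \<mu> = card {f. flippable n \<mu> f}"
proof -
  have "{\<nu>. ofg_adj n \<mu> \<nu>} = face_flip n \<mu> ` {f. flippable n \<mu> f}"
    unfolding ofg_adj_def by blast
  moreover have mv: "\<mu> \<in> mv_assignments n" using assms(2) unfolding locally_valid_def by simp
  moreover have "{f. flippable n \<mu> f} \<subseteq> faces n" unfolding flippable_def by blast
  ultimately show ?thesis unfolding ofg_degree_def
    using card_image inj_on_subset[OF flip_inj[OF assms(1) mv]] by metis
qed

theorem theorem4p9:
  fixes n :: nat
  assumes "n \<ge> 2"
  shows "ofg_degree n ` ofg_vertices n = {2..2*n-2} \<union> {2*n} \<and>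
         (\<lambda>\<mu>. card {f. flippable n \<mu> f}) ` ofg_vertices n = {2..2*n-2} \<union> {2*n}"
proof -
  let ?S = "{2..2*n-2} \<union> {2*n}"
  have C: "(\<lambda>\<mu>. card {f. flippable n \<mu> f}) ` ofg_vertices n = ?S"
  proof
    show "(\<lambda>\<mu>. card {f. flippable n \<mu> f}) ` ofg_vertices n \<subseteq> ?S"
    proof
      fix v assume "v \<in> (\<lambda>\<mu>. card {f. flippable n \<mu> f}) ` ofg_vertices n"
      then obtain \<mu> where mu: "locally_valid n \<mu>" "v = card (FF n \<mu>)"
        unfolding ofg_vertices_def using count_eq by auto
      show "v \<in> ?S" using FF_lower[OF mu(1) assms] FF_upper[OF assms, of \<mu>] mu(2) by auto
    qed
  next
    show "?S \<subseteq> (\<lambda>\<mu>. card {f. flippable n \<mu> f}) ` ofg_vertices n"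
    proof
      fix v assume v: "v \<in> ?S"
      have "\<exists>\<mu>. locally_valid n \<mu> \<and> card (FF n \<mu>) = v"
      proof (cases "v = 2*n")
        case True
        then show ?thesis using count_even[of 0 n] mu_c_valid assms by auto
      next
        case False
        then have v2: "2 \<le> v" "v \<le> 2*n-2" using v by auto
        show ?thesis
        proof (cases "even v")
          case True
          define m where "m = n - v div 2"
          have "m \<le> n-1" "2*n - 2*m = v" using v2 True unfolding m_def by auto
          then show ?thesis using count_even[of m n] mu_c_valid assms by metis
        next
          case False
          define m where "m = n - (v-1) div 2"
          have "m \<le> n-1" "2 \<le> m" "2*n - 2*m + 1 = v" using v2 False unfolding m_def by auto presburger+
          then show ?thesis using count_odd[of m n] mu_c_valid by metis
        qed
      qed
      then obtain \<mu> where "locally_valid n \<mu>" "card (FF n \<mu>) = v" by blast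
      then show "v \<in> (\<lambda>\<mu>. card {f. flippable n \<mu> f}) ` ofg_vertices n"
        unfolding ofg_vertices_def using count_eq by (metis (mono_tags, lifting) image_eqI mem_Collect_eq)
    qed
  qed
  have "ofg_degree n ` ofg_vertices n = (\<lambda>\<mu>. card {f. flippable n \<mu> f}) ` ofg_vertices n"
    using degree_eq[OF assms] unfolding ofg_vertices_def by (intro image_cong) auto
  then show ?thesis using C by simp
qed

end
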